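(* Let $\beta,\delta\in(0,1)$, $K>0$, and let $\eta_1,\eta_2\ge0$ be constants. Consider $$\frac{df}{dt}=\tfrac12 fm\beta L-\delta f-\eta_1 f^{3/2},\qquad \frac{dm}{dt}=\tfrac12 fm\beta L-\delta m-\eta_2 m^{3/2},\qquad L=1-\frac{f+m}{K}.$$ If $\beta K<2\delta$, then the trivial equilibrium $(0,0)$ is globally asymptotically stable.
   Context: $f,m$ are female and male densities, with populations considered in the region $0\le f,m$, $f+m\le K$. The model uses power-law harvesting of both females and males. *)

theory Defs
  imports "HOL-Analysis.Analysis"
begin

definition region :: "real \<Rightarrow> (real \<times> real) set" where
  "region K = {(f, m). 0 \<le> f \<and> 0 \<le> m \<and> f + m \<le> K}"

definition harvest_field ::
  "real \<Rightarrow> real \<Rightarrow> real \<Rightarrow> real \<Rightarrow> real \<Rightarrow> real \<times> real \<Rightarrow> real \<times> real" where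
  "harvest_field \<beta> \<delta> K \<eta>1 \<eta>2 p =
     (let f = fst p; m = snd p; L = 1 - (f + m) / K in
      (1/2 * f * m * \<beta> * L - \<delta> * f - \<eta>1 * f powr (3/2),
       1/2 * f * m * \<beta> * L - \<delta> * m - \<eta>2 * m powr (3/2)))"

definition is_solution ::
  "real \<Rightarrow> real \<Rightarrow> real \<Rightarrow> real \<Rightarrow> real \<Rightarrow> (real \<Rightarrow> real \<times> real) \<Rightarrow> bool" where
  "is_solution \<beta> \<delta> K \<eta>1 \<eta>2 x \<longleftrightarrow>
     (\<forall>t\<ge>0. x t \<in> region K \<and>
        (x has_vector_derivative harvest_field \<beta> \<delta> K \<eta>1 \<eta>2 (x t)) (at t within {0..}))"

definition globally_asymptotically_stable_origin ::
  "real \<Rightarrow> real \<Rightarrow> real \<Rightarrow> real \<Rightarrow> real \<Rightarrow> bool" where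
  "globally_asymptotically_stable_origin \<beta> \<delta> K \<eta>1 \<eta>2 \<longleftrightarrow>
     harvest_field \<beta> \<delta> K \<eta>1 \<eta>2 (0, 0) = (0, 0) \<and>
     (\<forall>\<epsilon>>0. \<exists>r>0. \<forall>x. is_solution \<beta> \<delta> K \<eta>1 \<eta>2 x \<longrightarrow> norm (x 0) < r \<longrightarrow>
         (\<forall>t\<ge>0. norm (x t) < \<epsilon>)) \<and>
     (\<forall>x. is_solution \<beta> \<delta> K \<eta>1 \<eta>2 x \<longrightarrow> (x \<longlongrightarrow> (0, 0)) at_top)"

end

theory Submission imports Defs "HOL-Real_Asymp.Real_Asymp" begin
lemma vd_sum:
  assumes "(x has_vector_derivative D) F"
  shows "((\<lambda>t. fst (x t) + snd (x t)) has_real_derivative (fst D + snd D)) F"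
proof -
  have "((\<lambda>t. fst (x t)) has_vector_derivative fst D) F"
    using assms unfolding has_vector_derivative_def
    by (auto dest!: has_derivative_fst)
  moreover have "((\<lambda>t. snd (x t)) has_vector_derivative snd D) F"
    using assms unfolding has_vector_derivative_def
    by (auto dest!: has_derivative_snd)
  ultimately show ?thesis
    by (simp add: has_real_derivative_iff_has_vector_derivative has_vector_derivative_add)
qed

lemma field_bound:
  assumes "0 < \<beta>" "0 < K" "0 \<le> \<eta>1" "0 \<le> \<eta>2" "(f,m) \<in> region K"
  shows "fst (harvest_field \<beta> \<delta> K \<eta>1 \<eta>2 (f,m)) + snd (harvest_field \<beta> \<delta> K \<eta>1 \<eta>2 (f,m))
     \<le> - (\<delta> - \<beta> * K / 4) * (f + m)"
proof -
  from assms have f: "0 \<le> f" and m: "0 \<le> m" and s: "f + m \<le> K" by (auto simp: region_def)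
  have L1: "1 - (f+m)/K \<le> 1" using f m assms by simp
  have fm: "0 \<le> f * m * \<beta>" using f m assms by simp
  have a: "f * m * \<beta> * (1 - (f+m)/K) \<le> f * m * \<beta>" using mult_left_mono[OF L1 fm] by simp
  have b: "4 * (f * m) \<le> (f+m)*(f+m)" using zero_le_square[of "f - m"] by (simp add: algebra_simps)
  have c: "(f+m)*(f+m) \<le> K * (f+m)" using s f m by (simp add: mult_right_mono)
  have bc: "f * m \<le> K * (f+m) / 4" using b c by linarith
  have d0: "\<beta> * (f * m) \<le> \<beta> * (K * (f+m) / 4)" using mult_left_mono[OF bc] assms(1) by simp
  have d: "f * m * \<beta> \<le> \<beta> * K / 4 * (f+m)" using d0 by (simp add: mult_ac)
  have e: "0 \<le> \<eta>1 * f powr (3/2)" "0 \<le> \<eta>2 * m powr (3/2)" using assms by auto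
  have a2: "1/2 * f * m * \<beta> * (1 - (f+m)/K) \<le> 1/2 * (f * m * \<beta>)" using a by simp
  have eq: "fst (harvest_field \<beta> \<delta> K \<eta>1 \<eta>2 (f,m)) + snd (harvest_field \<beta> \<delta> K \<eta>1 \<eta>2 (f,m))
     = 1/2 * f * m * \<beta> * (1 - (f+m)/K) - \<delta> * f - \<eta>1 * f powr (3/2)
       + (1/2 * f * m * \<beta> * (1 - (f+m)/K) - \<delta> * m - \<eta>2 * m powr (3/2))"
    by (simp add: harvest_field_def Let_def)
  have r: "- (\<delta> - \<beta> * K / 4) * (f + m) = - \<delta> * f - \<delta> * m + \<beta> * K / 4 * (f + m)"
    by (simp add: algebra_simps)
  show ?thesis unfolding eq r using a2 d e by linarith
qed

lemma decay:
  assumes "0 < \<beta>" "0 < K" "0 \<le> \<eta>1" "0 \<le> \<eta>2"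
    and sol: "is_solution \<beta> \<delta> K \<eta>1 \<eta>2 x" and t: "0 \<le> t"
  defines "c \<equiv> \<delta> - \<beta> * K / 4"
  shows "fst (x t) + snd (x t) \<le> (fst (x 0) + snd (x 0)) * exp (- c * t)"
proof -
  define V where "V s = fst (x s) + snd (x s)" for s
  define D where "D s = fst (harvest_field \<beta> \<delta> K \<eta>1 \<eta>2 (x s)) + snd (harvest_field \<beta> \<delta> K \<eta>1 \<eta>2 (x s))" for s
  define g where "g s = V s * exp (c * s)" for s
  have dV: "(V has_real_derivative D s) (at s within {0..})" if "0 \<le> s" for s
    using sol that unfolding is_solution_def V_def D_def
    by (auto intro!: vd_sum)
  have Dle: "D s \<le> - c * V s" if "0 \<le> s" for s
  proof -
    have "x s \<in> region K" using sol that unfolding is_solution_def by auto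
    then show ?thesis using field_bound[OF assms(1-4), of "fst (x s)" "snd (x s)" \<delta>]
      unfolding D_def V_def c_def by simp
  qed
  have dg: "(g has_real_derivative (D s * exp (c * s) + V s * (c * exp (c * s)))) (at s within {0..})"
    if "0 \<le> s" for s
    unfolding g_def
    by (auto intro!: derivative_eq_intros dV that)
  have "g t \<le> g 0"
  proof (cases "t = 0")
    case False
    show ?thesis
    proof (rule DERIV_nonpos_imp_decreasing_open[OF t])
      fix s assume s: "0 < s" "s < t"
      have "at s within {0..} = at s" by (rule at_within_interior) (use s in auto)
      then have "(g has_real_derivative (D s * exp (c * s) + V s * (c * exp (c * s)))) (at s)"
        using dg[of s] s by simp
      moreover have "D s * exp (c * s) + V s * (c * exp (c * s)) \<le> 0"
      proof -
        have "D s * exp (c * s) + V s * (c * exp (c * s)) = (D s + c * V s) * exp (c * s)"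
          by (simp add: algebra_simps)
        moreover have "D s + c * V s \<le> 0" using Dle[of s] s by simp
        ultimately show ?thesis by (simp add: mult_nonpos_nonneg)
      qed
      ultimately show "\<exists>y. (g has_real_derivative y) (at s) \<and> y \<le> 0" by blast
    next
      show "continuous_on {0..t} g"
        unfolding continuous_on_eq_continuous_within
      proof
        fix s assume "s \<in> {0..t}"
        then have "continuous (at s within {0..}) g"
          using dg[of s] by (auto intro: DERIV_continuous)
        then show "continuous (at s within {0..t}) g"
          by (rule continuous_within_subset) auto
      qed
    qed
  qed simp
  then have "V t * exp (c * t) \<le> V 0" by (simp add: g_def)
  then have "V t * exp (c * t) * exp (- c * t) \<le> V 0 * exp (- c * t)"
    by (rule mult_right_mono) simp
  then show ?thesis unfolding V_def by (simp add: mult.assoc flip: exp_add)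
qed

lemma normle: "norm (p :: real \<times> real) \<le> \<bar>fst p\<bar> + \<bar>snd p\<bar>"
  using norm_Pair_le[of "fst p" "snd p"] by simp

theorem mainTheorem17:
  fixes \<beta> \<delta> K \<eta>1 \<eta>2 :: real
  assumes "0 < \<beta>" "\<beta> < 1" "0 < \<delta>" "\<delta> < 1" "0 < K"
    and "0 \<le> \<eta>1" "0 \<le> \<eta>2"
    and "\<beta> * K < 2 * \<delta>"
  shows "globally_asymptotically_stable_origin \<beta> \<delta> K \<eta>1 \<eta>2"
proof -
  define c where "c = \<delta> - \<beta> * K / 4"
  have c: "0 < c" unfolding c_def using assms by simp
  have bnd: "norm (x t) \<le> norm (x 0) * 2 * exp (- c * t)"
    if sol: "is_solution \<beta> \<delta> K \<eta>1 \<eta>2 x" and t: "0 \<le> t" for x t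
  proof -
    have "x t \<in> region K" "x 0 \<in> region K" using sol t unfolding is_solution_def by auto
    then have nn: "0 \<le> fst (x t)" "0 \<le> snd (x t)" "0 \<le> fst (x 0)" "0 \<le> snd (x 0)"
      unfolding region_def by auto
    have "norm (x t) \<le> fst (x t) + snd (x t)" using normle[of "x t"] nn by simp
    also have "\<dots> \<le> (fst (x 0) + snd (x 0)) * exp (- c * t)"
      using decay[OF assms(1,5,6,7) sol t] unfolding c_def by simp
    also have "\<dots> \<le> (norm (x 0) * 2) * exp (- c * t)"
    proof (rule mult_right_mono)
      have "fst (x 0) \<le> norm (x 0)" "snd (x 0) \<le> norm (x 0)"
        using norm_fst_le[of "fst (x 0)" "snd (x 0)"] norm_snd_le[of "snd (x 0)" "fst (x 0)"] nn
        by auto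
      then show "fst (x 0) + snd (x 0) \<le> norm (x 0) * 2" by simp
    qed simp
    finally show ?thesis .
  qed
  have e: "harvest_field \<beta> \<delta> K \<eta>1 \<eta>2 (0, 0) = (0, 0)"
    by (simp add: harvest_field_def)
  have st: "\<forall>\<epsilon>>0. \<exists>r>0. \<forall>x. is_solution \<beta> \<delta> K \<eta>1 \<eta>2 x \<longrightarrow> norm (x 0) < r \<longrightarrow>
         (\<forall>t\<ge>0. norm (x t) < \<epsilon>)"
  proof (intro allI impI)
    fix \<epsilon> :: real assume "0 < \<epsilon>"
    show "\<exists>r>0. \<forall>x. is_solution \<beta> \<delta> K \<eta>1 \<eta>2 x \<longrightarrow> norm (x 0) < r \<longrightarrow>
         (\<forall>t\<ge>0. norm (x t) < \<epsilon>)"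
    proof (intro exI[of _ "\<epsilon>/2"] conjI allI impI)
      show "0 < \<epsilon>/2" using \<open>0 < \<epsilon>\<close> by simp
      fix x t assume sol: "is_solution \<beta> \<delta> K \<eta>1 \<eta>2 x" and n: "norm (x 0) < \<epsilon>/2" and t: "0 \<le> (t::real)"
      have "exp (- c * t) \<le> 1" using c t by simp
      then have "norm (x 0) * 2 * exp (- c * t) \<le> norm (x 0) * 2"
        by (simp add: mult_left_le)
      then show "norm (x t) < \<epsilon>" using bnd[OF sol t] n by linarith
    qed
  qed
  have at: "\<forall>x. is_solution \<beta> \<delta> K \<eta>1 \<eta>2 x \<longrightarrow> (x \<longlongrightarrow> (0, 0)) at_top"
  proof (intro allI impI)
    fix x assume sol: "is_solution \<beta> \<delta> K \<eta>1 \<eta>2 x"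
    have lim: "((\<lambda>t. norm (x 0) * 2 * exp (- c * t)) \<longlongrightarrow> 0) at_top"
      using c by real_asymp
    have "((\<lambda>t. norm (x t)) \<longlongrightarrow> 0) at_top"
    proof (rule tendsto_sandwich[OF _ _ tendsto_const lim])
      show "\<forall>\<^sub>F t in at_top. 0 \<le> norm (x t)" by simp
      show "\<forall>\<^sub>F t in at_top. norm (x t) \<le> norm (x 0) * 2 * exp (- c * t)"
        using eventually_ge_at_top[of 0] by eventually_elim (rule bnd[OF sol])
    qed
    then have "(x \<longlongrightarrow> 0) at_top" by (rule tendsto_norm_zero_cancel)
    then show "(x \<longlongrightarrow> (0, 0)) at_top" by (simp add: zero_prod_def)
  qed
  show ?thesis unfolding globally_asymptotically_stable_origin_def using e st at by blast
qed
end
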